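(* Let $J_0$ be a two-sided $p$-periodic Jacobi matrix, $1\le q\le\infty$, and $\varepsilon>0$. There is a constant $C$ such that $$e^{1-p}\bigl\|\tilde d_m((a,b),\mathcal{T}_{J_0})\bigr\|_{\ell^q}\le\bigl\|d_m((a,b),\mathcal{T}_{J_0})\bigr\|_{\ell^q}\le C\bigl\|\tilde d_m((a,b),\mathcal{T}_{J_0})\bigr\|_{\ell^q}$$ for all bounded sequences $\{(a_n,b_n)\}_{n\ge1}$ with $b_n\in\mathbb{R}$ and $\varepsilon^{-1}>a_n>\varepsilon$ for all $n$, where all $\ell^q$ norms are taken over $m\in\{1,2,3,\dots\}$.
   Context: For a two-sided $p$-periodic Jacobi matrix $J_0$ (tridiagonal on $\ell^2(\mathbb{Z})$ with $p$-periodic parameters $a^{(0)}_n>0$, $b^{(0)}_n\in\mathbb{R}$), its discriminant is $\Delta_{J_0}(x)=\mathrm{Tr}(\Lambda_p(x)\cdots\Lambda_1(x))$ with $\Lambda_n(x)=\frac1{a^{(0)}_n}\begin{pmatrix}x-b^{(0)}_n&-1\\(a^{(0)}_n)^2&0\end{pmatrix}$, and the isospectral torus $\mathcal{T}_{J_0}$ is the set of two-sided $p$-periodic Jacobi parameter sequences with the same discriminant. For sequences $(a,b),(a',b')$ (two-sided ones restricted to indices $\ge1$): $d_m((a,b),(a',b'))=\sum_{k=0}^\infty e^{-k}(|a_{m+k}-a'_{m+k}|+|b_{m+k}-b'_{m+k}|)$ and $\tilde d_m((a,b),(a',b'))=\sum_{k=0}^{p-1}(|a_{m+k}-a'_{m+k}|+|b_{m+k}-b'_{m+k}|)$;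 distances to $\mathcal{T}_{J_0}$ are infima over $(a',b')\in\mathcal{T}_{J_0}$. *)

theory Defs
  imports "HOL-Analysis.Analysis"
begin

definition periodic_jacobi :: "nat \<Rightarrow> (int \<Rightarrow> real) \<Rightarrow> (int \<Rightarrow> real) \<Rightarrow> bool" where
  "periodic_jacobi p a b \<longleftrightarrow> p \<ge> 1 \<and>
     (\<forall>n. a (n + int p) = a n \<and> b (n + int p) = b n \<and> a n > 0)"

definition transfer :: "(int \<Rightarrow> real) \<Rightarrow> (int \<Rightarrow> real) \<Rightarrow> int \<Rightarrow> real \<Rightarrow> real^2^2" where
  "transfer a b n x = (\<chi> i j.
     (if i = 1 then (if j = 1 then x - b n else -1)
      else (if j = 1 then (a n)^2 else 0)) / a n)"

fun transfer_prod :: "(int \<Rightarrow> real) \<Rightarrow> (int \<Rightarrow> real) \<Rightarrow> nat \<Rightarrow> real \<Rightarrow> real^2^2" where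
  "transfer_prod a b 0 x = mat 1"
| "transfer_prod a b (Suc k) x = transfer a b (int (Suc k)) x ** transfer_prod a b k x"

definition trace2 :: "real^2^2 \<Rightarrow> real" where
  "trace2 M = M $ 1 $ 1 + M $ 2 $ 2"

definition discriminant :: "nat \<Rightarrow> (int \<Rightarrow> real) \<Rightarrow> (int \<Rightarrow> real) \<Rightarrow> real \<Rightarrow> real" where
  "discriminant p a b x = trace2 (transfer_prod a b p x)"

definition iso_torus :: "nat \<Rightarrow> (int \<Rightarrow> real) \<Rightarrow> (int \<Rightarrow> real) \<Rightarrow> ((int \<Rightarrow> real) \<times> (int \<Rightarrow> real)) set" where
  "iso_torus p a0 b0 = {(a', b'). periodic_jacobi p a' b' \<and>
      discriminant p a' b' = discriminant p a0 b0}"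

definition dist_exp :: "nat \<Rightarrow> (nat \<Rightarrow> real) \<Rightarrow> (nat \<Rightarrow> real) \<Rightarrow> (int \<Rightarrow> real) \<Rightarrow> (int \<Rightarrow> real) \<Rightarrow> real" where
  "dist_exp m a b a' b' = (\<Sum>k. exp (- real k) *
      (\<bar>a (m + k) - a' (int (m + k))\<bar> + \<bar>b (m + k) - b' (int (m + k))\<bar>))"

definition dist_tilde :: "nat \<Rightarrow> nat \<Rightarrow> (nat \<Rightarrow> real) \<Rightarrow> (nat \<Rightarrow> real) \<Rightarrow> (int \<Rightarrow> real) \<Rightarrow> (int \<Rightarrow> real) \<Rightarrow> real" where
  "dist_tilde p m a b a' b' = (\<Sum>k<p.
      \<bar>a (m + k) - a' (int (m + k))\<bar> + \<bar>b (m + k) - b' (int (m + k))\<bar>)"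

definition dist_exp_torus where
  "dist_exp_torus p a0 b0 m a b = (INF t \<in> iso_torus p a0 b0. dist_exp m a b (fst t) (snd t))"

definition dist_tilde_torus where
  "dist_tilde_torus p a0 b0 m a b = (INF t \<in> iso_torus p a0 b0. dist_tilde p m a b (fst t) (snd t))"

definition lq_norm :: "ennreal \<Rightarrow> (nat \<Rightarrow> real) \<Rightarrow> ennreal" where
  "lq_norm q x = (if q = \<infinity> then (SUP m \<in> {1..}. ennreal \<bar>x m\<bar>)
     else (let S = (\<Sum>m. ennreal (\<bar>x (Suc m)\<bar> powr enn2real q)) in
           if S = \<infinity> then \<infinity> else ennreal (enn2real S powr (1 / enn2real q))))"

end

theory Submission
  imports Defs "HOL-Computational_Algebra.Polynomial"
begin

lemma q_real:
  fixes q :: ennreal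
  assumes "1 \<le> q" "q \<noteq> \<infinity>"
  shows "1 \<le> enn2real q" "q = ennreal (enn2real q)"
proof -
  show "q = ennreal (enn2real q)" using assms(2) by (simp add: ennreal_enn2real_if)
  then show "1 \<le> enn2real q" using assms(1)
    by (metis ennreal_le_iff enn2real_nonneg ennreal_1)
qed

lemma lq_finite_step:
  fixes Su Sv :: ennreal and r k :: real
  assumes "Su \<le> ennreal k * Sv" "r \<ge> 1" "k \<ge> 0" "c \<ge> 0" "k \<le> c powr r"
  shows "(if Su = \<infinity> then \<infinity> else ennreal (enn2real Su powr (1 / r)))
       \<le> ennreal c * (if Sv = \<infinity> then \<infinity> else ennreal (enn2real Sv powr (1 / r)))"
proof (cases "Sv = \<infinity>")
  case True
  show ?thesis
  proof (cases "c = 0")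
    case True
    then have "k = 0" using assms by simp
    then have "Su = 0" using assms(1) by simp
    then show ?thesis by simp
  next
    case False
    then show ?thesis using \<open>Sv = \<infinity>\<close> assms by (simp add: ennreal_mult_top)
  qed
next
  case False
  have kS: "ennreal k * Sv < \<infinity>" using False by (simp add: ennreal_mult_less_top less_top)
  then have Su: "Su \<noteq> \<infinity>" using assms(1) by (metis le_less_trans less_irrefl)
  have "enn2real Su \<le> enn2real (ennreal k * Sv)"
    using assms(1) kS by (intro enn2real_mono) auto
  also have "\<dots> = k * enn2real Sv" using assms by (simp add: enn2real_mult)
  also have "\<dots> \<le> c powr r * enn2real Sv" using assms by (intro mult_right_mono) auto
  finally have le: "enn2real Su \<le> c powr r * enn2real Sv" .
  have "enn2real Su powr (1/r) \<le> (c powr r * enn2real Sv) powr (1/r)"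
    using le assms by (intro powr_mono2) auto
  also have "\<dots> = c * enn2real Sv powr (1/r)"
    using assms by (simp add: powr_mult powr_powr)
  finally show ?thesis using Su False assms
    by (simp add: ennreal_mult[symmetric] ennreal_leI)
qed

lemma lq_scale:
  assumes "1 \<le> q" "c \<ge> 0" "\<forall>m\<ge>1. \<bar>u m\<bar> \<le> c * \<bar>v m\<bar>"
  shows "lq_norm q u \<le> ennreal c * lq_norm q v"
proof (cases "q = \<infinity>")
  case True
  have "ennreal \<bar>u m\<bar> \<le> ennreal c * (SUP m \<in> {1..}. ennreal \<bar>v m\<bar>)" if "m \<ge> 1" for m
  proof -
    have "\<bar>u m\<bar> \<le> c * \<bar>v m\<bar>" using assms(3) that by blast
    then have "ennreal \<bar>u m\<bar> \<le> ennreal (c * \<bar>v m\<bar>)" by (rule ennreal_leI)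
    also have "\<dots> = ennreal c * ennreal \<bar>v m\<bar>" using assms(2) by (simp add: ennreal_mult)
    finally have "ennreal \<bar>u m\<bar> \<le> ennreal c * ennreal \<bar>v m\<bar>" .
    also have "\<dots> \<le> ennreal c * (SUP m \<in> {1..}. ennreal \<bar>v m\<bar>)"
      using that by (intro mult_left_mono SUP_upper) auto
    finally show ?thesis .
  qed
  then have "(SUP m \<in> {1..}. ennreal \<bar>u m\<bar>) \<le> ennreal c * (SUP m \<in> {1..}. ennreal \<bar>v m\<bar>)"
    by (intro SUP_least) auto
  then show ?thesis using True unfolding lq_norm_def by (simp only: if_P[OF refl])
next
  case False
  define r where "r = enn2real q"
  have r: "1 \<le> r" "q = ennreal r" using q_real[OF assms(1) False] r_def by auto
  have "(\<Sum>m. ennreal (\<bar>u (Suc m)\<bar> powr r)) \<le> (\<Sum>m. ennreal (c powr r) * ennreal (\<bar>v (Suc m)\<bar> powr r))"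
  proof (intro suminf_le allI)
    fix m
    have "\<bar>u (Suc m)\<bar> \<le> c * \<bar>v (Suc m)\<bar>" using assms(3) by simp
    then have "\<bar>u (Suc m)\<bar> powr r \<le> (c * \<bar>v (Suc m)\<bar>) powr r"
      using r by (intro powr_mono2) auto
    also have "\<dots> = c powr r * \<bar>v (Suc m)\<bar> powr r" using assms(2) by (simp add: powr_mult)
    finally have "ennreal (\<bar>u (Suc m)\<bar> powr r) \<le> ennreal (c powr r * \<bar>v (Suc m)\<bar> powr r)"
      by (rule ennreal_leI)
    then show "ennreal (\<bar>u (Suc m)\<bar> powr r) \<le> ennreal (c powr r) * ennreal (\<bar>v (Suc m)\<bar> powr r)"
      by (simp add: ennreal_mult)
  qed (rule summableI)+
  also have "\<dots> = ennreal (c powr r) * (\<Sum>m. ennreal (\<bar>v (Suc m)\<bar> powr r))" by (rule ennreal_suminf_cmult)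
  finally have le: "(\<Sum>m. ennreal (\<bar>u (Suc m)\<bar> powr r)) \<le> ennreal (c powr r) * (\<Sum>m. ennreal (\<bar>v (Suc m)\<bar> powr r))" .
  define Su where "Su = (\<Sum>m. ennreal (\<bar>u (Suc m)\<bar> powr r))"
  define Sv where "Sv = (\<Sum>m. ennreal (\<bar>v (Suc m)\<bar> powr r))"
  have main: "(if Su = \<infinity> then \<infinity> else ennreal (enn2real Su powr (1 / r)))
       \<le> ennreal c * (if Sv = \<infinity> then \<infinity> else ennreal (enn2real Sv powr (1 / r)))"
    unfolding Su_def Sv_def by (rule lq_finite_step[where k="c powr r", OF le]) (use r assms(2) in auto)
  have "lq_norm q u = (if Su = \<infinity> then \<infinity> else ennreal (enn2real Su powr (1 / r)))"
    unfolding lq_norm_def Let_def Su_def r_def using False by (simp only: if_False)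
  moreover have "lq_norm q v = (if Sv = \<infinity> then \<infinity> else ennreal (enn2real Sv powr (1 / r)))"
    unfolding lq_norm_def Let_def Sv_def r_def using False by (simp only: if_False)
  ultimately show ?thesis using main by simp
qed
lemma ennsum_swap_le:
  fixes f :: "nat \<Rightarrow> nat \<Rightarrow> ennreal"
  shows "(\<Sum>m. \<Sum>j. f m j) \<le> (\<Sum>j. \<Sum>m. f m j)"
proof (rule suminf_le_const)
  show "summable (\<lambda>m. \<Sum>j. f m j)" by simp
  fix N
  have "(\<Sum>m<N. \<Sum>j. f m j) = (\<Sum>j. \<Sum>m<N. f m j)"
    by (rule suminf_sum[symmetric]) simp
  also have "\<dots> \<le> (\<Sum>j. \<Sum>m. f m j)"
    by (intro suminf_le allI sum_le_suminf) auto
  finally show "(\<Sum>m<N. \<Sum>j. f m j) \<le> (\<Sum>j. \<Sum>m. f m j)" .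
qed
lemma ennsum_shift_le:
  fixes f :: "nat \<Rightarrow> ennreal"
  shows "(\<Sum>m. f (m + j)) \<le> (\<Sum>m. f m)"
  using suminf_offset[of f j] by (simp add: add_increasing2) 

definition cst :: real where "cst = 1 / (1 - exp (- 1 / 2))"

lemma cst_props: "cst \<ge> 1" "(\<Sum>j. ennreal (exp (- real j / 2))) = ennreal cst"
proof -
  have e: "exp (- 1 / 2) < (1::real)" "0 < exp (- 1 / 2::real)" by auto
  then show "cst \<ge> 1" unfolding cst_def by (simp add: field_simps)
  have eq: "exp (- real j / 2) = exp (- 1 / 2) ^ j" for j
    by (simp add: exp_of_nat_mult[symmetric] field_simps)
  have "(\<lambda>j. exp (- 1 / 2::real) ^ j) sums (1 / (1 - exp (- 1 / 2)))"
    using geometric_sums[of "exp (- 1 / 2::real)"] e by simp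
  then have "(\<lambda>j. exp (- real j / 2)) sums cst" unfolding cst_def eq .
  then show "(\<Sum>j. ennreal (exp (- real j / 2))) = ennreal cst"
    by (subst suminf_ennreal2) (auto simp: sums_iff)
qed

lemma term_le_suminf_enn: "(f :: nat \<Rightarrow> ennreal) j \<le> (\<Sum>j. f j)"
  using sum_le_suminf[of f "{j}"] by simp

lemma lq_sup:
  assumes "1 \<le> q" "K > 0"
   "\<forall>m\<ge>1. \<forall>M\<ge>0. (\<forall>j. exp (- real j / 2) * \<bar>v (m + j)\<bar> \<le> M) \<longrightarrow> \<bar>u m\<bar> \<le> K * M"
  shows "lq_norm q u \<le> ennreal (K * cst) * lq_norm q v"
proof (cases "q = \<infinity>")
  case True
  define V where "V = (SUP m \<in> {1..}. ennreal \<bar>v m\<bar>)"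
  have "ennreal \<bar>u m\<bar> \<le> ennreal (K * cst) * V" if "m \<ge> 1" for m
  proof (cases "V = \<infinity>")
    case True
    then show ?thesis using assms cst_props by (simp add: ennreal_mult_top)
  next
    case False
    then obtain M0 where M0: "V = ennreal M0" "M0 \<ge> 0" by (cases V) auto
    have vb: "\<bar>v n\<bar> \<le> M0" if "n \<ge> 1" for n
    proof -
      have "ennreal \<bar>v n\<bar> \<le> V" unfolding V_def using that by (intro SUP_upper) auto
      then show ?thesis using M0 by (simp add: ennreal_le_iff)
    qed
    have "exp (- real j / 2) * \<bar>v (m + j)\<bar> \<le> M0" for j
    proof -
      have "exp (- real j / 2) * \<bar>v (m + j)\<bar> \<le> 1 * \<bar>v (m + j)\<bar>"
        by (intro mult_right_mono) auto
      also have "\<dots> \<le> M0" using vb[of "m+j"] that by simp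
      finally show ?thesis .
    qed
    then have "\<bar>u m\<bar> \<le> K * M0" using assms(3) that M0 by blast
    also have "\<dots> \<le> K * cst * M0"
    proof -
      have "(K*M0)*1 \<le> (K*M0)*cst" using assms M0 cst_props by (intro mult_left_mono) auto
      then show ?thesis by (simp add: mult_ac)
    qed
    finally have "\<bar>u m\<bar> \<le> K * cst * M0" .
    then have "ennreal \<bar>u m\<bar> \<le> ennreal (K * cst * M0)" by (rule ennreal_leI)
    also have "\<dots> = ennreal (K * cst) * V" using M0 assms cst_props by (simp add: ennreal_mult)
    finally show ?thesis .
  qed
  then have "(SUP m \<in> {1..}. ennreal \<bar>u m\<bar>) \<le> ennreal (K * cst) * V"
    by (intro SUP_least) auto
  then show ?thesis using True unfolding lq_norm_def V_def by (simp only: if_P[OF refl])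
next
  case False
  define r where "r = enn2real q"
  have r: "1 \<le> r" "q = ennreal r" using q_real[OF assms(1) False] r_def by auto
  define W where "W m = (\<Sum>j. ennreal (exp (- real j / 2) * \<bar>v (m + j)\<bar> powr r))" for m
  have pw: "ennreal (\<bar>u m\<bar> powr r) \<le> ennreal (K powr r) * W m" if "m \<ge> 1" for m
  proof (cases "W m = \<infinity>")
    case True
    then show ?thesis using assms by (simp add: ennreal_mult_top)
  next
    case False
    then obtain w where w: "W m = ennreal w" "w \<ge> 0" by (cases "W m") auto
    have "exp (- real j / 2) * \<bar>v (m + j)\<bar> \<le> w powr (1 / r)" for j
    proof -
      have "ennreal (exp (- real j / 2) * \<bar>v (m + j)\<bar> powr r) \<le> W m"
        unfolding W_def by (rule term_le_suminf_enn)
      then have t: "exp (- real j / 2) * \<bar>v (m + j)\<bar> powr r \<le> w" using w by (simp add: ennreal_le_iff)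
      have "exp (- real j / 2) powr r \<le> exp (- real j / 2)"
      proof -
        have "exp (- real j / 2) powr r = exp (- real j / 2 * r)" by (simp add: powr_def)
        also have "\<dots> \<le> exp (- real j / 2)" using r by (simp add: mult_le_cancel_left1)
        finally show ?thesis .
      qed
      then have "(exp (- real j / 2) * \<bar>v (m + j)\<bar>) powr r \<le> w"
        using t by (simp add: powr_mult) (metis mult_right_mono powr_ge_zero order_trans)
      then have "((exp (- real j / 2) * \<bar>v (m + j)\<bar>) powr r) powr (1/r) \<le> w powr (1/r)"
        using r by (intro powr_mono2) auto
      also have "((exp (- real j / 2) * \<bar>v (m + j)\<bar>) powr r) powr (1/r) = exp (- real j / 2) * \<bar>v (m + j)\<bar>"
        using r by (simp add: powr_powr)
      finally show ?thesis .
    qed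
    then have "\<bar>u m\<bar> \<le> K * w powr (1 / r)" using assms(3) that by simp
    then have "\<bar>u m\<bar> powr r \<le> (K * w powr (1 / r)) powr r" using r by (intro powr_mono2) auto
    also have "\<dots> = K powr r * w" using r assms w by (simp add: powr_mult powr_powr)
    finally show ?thesis using w assms by (simp add: ennreal_mult[symmetric] ennreal_leI)
  qed
  define Sv where "Sv = (\<Sum>m. ennreal (\<bar>v (Suc m)\<bar> powr r))"
  have s1: "(\<Sum>m. ennreal (\<bar>u (Suc m)\<bar> powr r)) \<le> (\<Sum>m. ennreal (K powr r) * W (Suc m))"
    using pw by (intro suminf_le) (auto intro: summableI)
  have s2: "(\<Sum>m. W (Suc m)) \<le> (\<Sum>j. \<Sum>m. ennreal (exp (- real j / 2) * \<bar>v (Suc m + j)\<bar> powr r))"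
    unfolding W_def by (rule ennsum_swap_le)
  have s3: "(\<Sum>j. \<Sum>m. ennreal (exp (- real j / 2) * \<bar>v (Suc m + j)\<bar> powr r))
      = (\<Sum>j. ennreal (exp (- real j / 2)) * (\<Sum>m. ennreal (\<bar>v (Suc (m + j))\<bar> powr r)))"
  proof -
    have "ennreal (exp (- real j / 2) * \<bar>v (Suc m + j)\<bar> powr r)
       = ennreal (exp (- real j / 2)) * ennreal (\<bar>v (Suc (m + j))\<bar> powr r)" for j m
      by (simp add: ennreal_mult)
    then show ?thesis by (simp only: ennreal_suminf_cmult)
  qed
  have s4: "(\<Sum>m. ennreal (\<bar>v (Suc (m + j))\<bar> powr r)) \<le> Sv" for j
    unfolding Sv_def using ennsum_shift_le[of "\<lambda>m. ennreal (\<bar>v (Suc m)\<bar> powr r)" j] by simp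
  have s5: "(\<Sum>j. ennreal (exp (- real j / 2)) * (\<Sum>m. ennreal (\<bar>v (Suc (m + j))\<bar> powr r)))
     \<le> (\<Sum>j. ennreal (exp (- real j / 2)) * Sv)"
    by (rule suminf_le) (auto intro: summableI mult_left_mono s4)
  have s6: "(\<Sum>j. ennreal (exp (- real j / 2)) * Sv) = ennreal cst * Sv"
    using cst_props(2) by (simp only: ennreal_suminf_cmult mult.commute[of _ Sv])
  have le: "(\<Sum>m. ennreal (\<bar>u (Suc m)\<bar> powr r)) \<le> ennreal (K powr r * cst) * Sv"
  proof -
    have "(\<Sum>m. ennreal (\<bar>u (Suc m)\<bar> powr r)) \<le> ennreal (K powr r) * (\<Sum>m. W (Suc m))"
      using s1 by (simp only: ennreal_suminf_cmult)
    also have "\<dots> \<le> ennreal (K powr r) * (ennreal cst * Sv)"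
      using s2 s3 s5 s6 by (intro mult_left_mono) auto
    also have "\<dots> = ennreal (K powr r * cst) * Sv"
      using cst_props by (simp add: ennreal_mult mult.assoc)
    finally show ?thesis .
  qed
  define Su where "Su = (\<Sum>m. ennreal (\<bar>u (Suc m)\<bar> powr r))"
  have kc: "K powr r * cst \<le> (K * cst) powr r"
  proof -
    have "cst = cst powr 1" using cst_props by simp
    also have "\<dots> \<le> cst powr r" using r cst_props by (intro powr_mono) auto
    finally have "K powr r * cst \<le> K powr r * cst powr r" by (intro mult_left_mono) auto
    also have "\<dots> = (K * cst) powr r" using assms cst_props by (simp add: powr_mult)
    finally show ?thesis .
  qed
  have nn1: "0 \<le> K powr r * cst" using cst_props by simp
  have nn2: "0 \<le> K * cst" using assms cst_props by simp
  have main: "(if Su = \<infinity> then \<infinity> else ennreal (enn2real Su powr (1 / r)))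
       \<le> ennreal (K * cst) * (if Sv = \<infinity> then \<infinity> else ennreal (enn2real Sv powr (1 / r)))"
    unfolding Su_def Sv_def by (rule lq_finite_step[OF le[unfolded Sv_def] r(1) nn1 nn2 kc])
  have "lq_norm q u = (if Su = \<infinity> then \<infinity> else ennreal (enn2real Su powr (1 / r)))"
    unfolding lq_norm_def Let_def Su_def r_def using False by (simp only: if_False)
  moreover have "lq_norm q v = (if Sv = \<infinity> then \<infinity> else ennreal (enn2real Sv powr (1 / r)))"
    unfolding lq_norm_def Let_def Sv_def r_def using False by (simp only: if_False)
  ultimately show ?thesis using main by simp
qed

lemma two_ne_one: "(2::2) \<noteq> 1" by simp

lemma tr11: "transfer a b n x $ 1 $ 1 = (x - b n) / a n" by (simp add: transfer_def)
lemma tr12: "transfer a b n x $ 1 $ 2 = -1 / a n" by (simp add: transfer_def)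
lemma tr21: "a n \<noteq> 0 \<Longrightarrow> transfer a b n x $ 2 $ 1 = a n" by (simp add: transfer_def power2_eq_square)
lemma tr22: "transfer a b n x $ 2 $ 2 = 0" by (simp add: transfer_def)
lemma mm2: "((A::real^2^2) ** B) $ i $ j = A$i$1 * B$1$j + A$i$2 * B$2$j"
  by (simp add: matrix_matrix_mult_def sum_2)

definition Pk :: "(int \<Rightarrow> real) \<Rightarrow> nat \<Rightarrow> real" where "Pk a k = (\<Prod>i<k. a (int (Suc i)))"
definition Bk :: "(int \<Rightarrow> real) \<Rightarrow> nat \<Rightarrow> real" where "Bk b k = (\<Sum>i<k. b (int (Suc i)))"

lemma tp_poly:
  assumes apos: "\<forall>n. a n > 0" and k: "k \<ge> 1"
  shows "\<exists>Q11 Q12 Q21 Q22. (\<forall>x. Pk a k * transfer_prod a b k x $1$1 = poly Q11 x)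
     \<and> (\<forall>x. Pk a k * transfer_prod a b k x $1$2 = poly Q12 x)
     \<and> (\<forall>x. Pk a k * transfer_prod a b k x $2$1 = poly Q21 x)
     \<and> (\<forall>x. Pk a k * transfer_prod a b k x $2$2 = poly Q22 x)
     \<and> coeff Q11 k = 1 \<and> coeff Q11 (k - 1) = - Bk b k \<and> (\<forall>i>k. coeff Q11 i = 0)
     \<and> (\<forall>i\<ge>k. coeff Q12 i = 0) \<and> (\<forall>i\<ge>k. coeff Q21 i = 0) \<and> (\<forall>i. k \<le> i + 1 \<longrightarrow> coeff Q22 i = 0)"
  using k
proof (induction k rule: nat_induct_at_least)
  case base
  have a1: "a 1 \<noteq> 0" using apos by (metis less_irrefl)
  have M: "transfer_prod a b 1 x = transfer a b 1 x" for x
    by (simp add: matrix_mul_rid)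
  have P: "Pk a (Suc 0) = a 1" by (simp add: Pk_def)
  show ?case
  proof (intro exI conjI allI impI)
    show "Pk a 1 * transfer_prod a b 1 x $ 1 $ 1 = poly [:- b 1, 1:] x" for x
      using a1 by (simp add: M P tr11)
    show "Pk a 1 * transfer_prod a b 1 x $ 1 $ 2 = poly [:- 1:] x" for x
      using a1 by (simp add: M P tr12)
    show "Pk a 1 * transfer_prod a b 1 x $ 2 $ 1 = poly [:a 1 ^ 2:] x" for x
      using a1 by (simp add: M P tr21 power2_eq_square)
    show "Pk a 1 * transfer_prod a b 1 x $ 2 $ 2 = poly 0 x" for x
      by (simp add: M P tr22)
    show "coeff [:- b 1, 1:] 1 = 1" by simp
    show "coeff [:- b 1, 1:] (1 - 1) = - Bk b 1" by (simp add: Bk_def)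
    show "coeff [:- b 1, 1:] i = 0" if "1 < i" for i
      using that by (cases i) (auto simp: coeff_pCons split: nat.splits)
    show "coeff [:- 1:] i = 0" if "1 \<le> i" for i
      using that by (cases i) (auto simp: coeff_pCons split: nat.splits)
    show "coeff [:a 1 ^ 2:] i = 0" if "1 \<le> i" for i
      using that by (cases i) (auto simp: coeff_pCons split: nat.splits)
    show "coeff (0::real poly) i = 0" for i by simp
  qed
next
  case (Suc k)
  then obtain Q11 Q12 Q21 Q22 where
    h1: "\<forall>x. Pk a k * transfer_prod a b k x $1$1 = poly Q11 x" and
    h2: "\<forall>x. Pk a k * transfer_prod a b k x $1$2 = poly Q12 x" and
    h3: "\<forall>x. Pk a k * transfer_prod a b k x $2$1 = poly Q21 x" and
    h4: "\<forall>x. Pk a k * transfer_prod a b k x $2$2 = poly Q22 x" and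
    c1: "coeff Q11 k = 1" and c2: "coeff Q11 (k - 1) = - Bk b k" and c3: "\<forall>i>k. coeff Q11 i = 0" and
    c4: "\<forall>i\<ge>k. coeff Q12 i = 0" and c5: "\<forall>i\<ge>k. coeff Q21 i = 0" and
    c6: "\<forall>i. k \<le> i + 1 \<longrightarrow> coeff Q22 i = 0"
    by blast
  define \<alpha> where "\<alpha> = a (int (Suc k))"
  define \<beta> where "\<beta> = b (int (Suc k))"
  have an: "\<alpha> \<noteq> 0" using apos unfolding \<alpha>_def by (metis less_irrefl)
  have P: "Pk a (Suc k) = Pk a k * \<alpha>" by (simp add: Pk_def \<alpha>_def)
  have B: "Bk b (Suc k) = Bk b k + \<beta>" by (simp add: Bk_def \<beta>_def)
  define M where "M x = transfer_prod a b k x" for x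
  define T where "T x = transfer a b (int (Suc k)) x" for x
  have MS: "transfer_prod a b (Suc k) x = T x ** M x" for x by (simp add: M_def T_def)
  have T11: "T x $1$1 = (x - \<beta>) / \<alpha>" for x by (simp add: T_def tr11 \<alpha>_def \<beta>_def)
  have T12: "T x $1$2 = -1 / \<alpha>" for x by (simp add: T_def tr12 \<alpha>_def)
  have T21: "T x $2$1 = \<alpha>" for x using an by (simp add: T_def tr21 \<alpha>_def)
  have T22: "T x $2$2 = 0" for x by (simp add: T_def tr22)
  show ?case
  proof (intro exI conjI allI impI)
    show "Pk a (Suc k) * transfer_prod a b (Suc k) x $ 1 $ 1 = poly (pCons 0 Q11 - smult \<beta> Q11 - Q21) x" for x
    proof -
      have "Pk a (Suc k) * transfer_prod a b (Suc k) x $ 1 $ 1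
          = (x - \<beta>) * (Pk a k * M x $1$1) - Pk a k * M x $2$1"
        unfolding MS mm2 T11 T12 P using an by (simp add: field_simps)
      then show ?thesis using h1 h3 by (simp add: M_def algebra_simps)
    qed
    show "Pk a (Suc k) * transfer_prod a b (Suc k) x $ 1 $ 2 = poly (pCons 0 Q12 - smult \<beta> Q12 - Q22) x" for x
    proof -
      have "Pk a (Suc k) * transfer_prod a b (Suc k) x $ 1 $ 2
          = (x - \<beta>) * (Pk a k * M x $1$2) - Pk a k * M x $2$2"
        unfolding MS mm2 T11 T12 P using an by (simp add: field_simps)
      then show ?thesis using h2 h4 by (simp add: M_def algebra_simps)
    qed
    show "Pk a (Suc k) * transfer_prod a b (Suc k) x $ 2 $ 1 = poly (smult (\<alpha>^2) Q11) x" for x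
    proof -
      have "Pk a (Suc k) * transfer_prod a b (Suc k) x $ 2 $ 1 = \<alpha>^2 * (Pk a k * M x $1$1)"
        unfolding MS mm2 T21 T22 P by (simp add: power2_eq_square)
      then show ?thesis using h1 by (simp add: M_def)
    qed
    show "Pk a (Suc k) * transfer_prod a b (Suc k) x $ 2 $ 2 = poly (smult (\<alpha>^2) Q12) x" for x
    proof -
      have "Pk a (Suc k) * transfer_prod a b (Suc k) x $ 2 $ 2 = \<alpha>^2 * (Pk a k * M x $1$2)"
        unfolding MS mm2 T21 T22 P by (simp add: power2_eq_square)
      then show ?thesis using h2 by (simp add: M_def)
    qed
    show "coeff (pCons 0 Q11 - smult \<beta> Q11 - Q21) (Suc k) = 1"
      using c1 c3 c5 by simp
    show "coeff (pCons 0 Q11 - smult \<beta> Q11 - Q21) (Suc k - 1) = - Bk b (Suc k)"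
      using c1 c2 c5 Suc.hyps B by (cases k) auto
    show "coeff (pCons 0 Q11 - smult \<beta> Q11 - Q21) i = 0" if "Suc k < i" for i
      using that c3 c5 by (cases i) auto
    show "coeff (pCons 0 Q12 - smult \<beta> Q12 - Q22) i = 0" if "Suc k \<le> i" for i
      using that c4 c6 by (cases i) auto
    show "coeff (smult (\<alpha>^2) Q11) i = 0" if "Suc k \<le> i" for i
      using that c3 by auto
    show "coeff (smult (\<alpha>^2) Q12) i = 0" if "Suc k \<le> i + 1" for i
      using that c4 by auto
  qed
qed

lemma disc_poly:
  assumes apos: "\<forall>n. a n > 0" and p: "p \<ge> 1"
  shows "\<exists>Q. (\<forall>x. Pk a p * discriminant p a b x = poly Q x) \<and> coeff Q p = 1 \<and> coeff Q (p - 1) = - Bk b p"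
proof -
  obtain Q11 Q12 Q21 Q22 where
    h1: "\<forall>x. Pk a p * transfer_prod a b p x $1$1 = poly Q11 x" and
    h4: "\<forall>x. Pk a p * transfer_prod a b p x $2$2 = poly Q22 x" and
    c1: "coeff Q11 p = 1" and c2: "coeff Q11 (p - 1) = - Bk b p" and
    c6: "\<forall>i. p \<le> i + 1 \<longrightarrow> coeff Q22 i = 0"
    using tp_poly[OF apos p, of b] by blast
  show ?thesis
  proof (intro exI conjI allI)
    show "Pk a p * discriminant p a b x = poly (Q11 + Q22) x" for x
      using h1 h4 by (simp add: discriminant_def trace2_def distrib_left)
    show "coeff (Q11 + Q22) p = 1" using c1 c6 by simp
    show "coeff (Q11 + Q22) (p - 1) = - Bk b p" using c2 c6 p by simp
  qed
qed

lemma disc_invariants: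
  assumes "\<forall>n. a n > 0" "\<forall>n. a' n > 0" "p \<ge> 1"
    and "discriminant p a b = discriminant p a' b'"
  shows "Pk a p = Pk a' p" "Bk b p = Bk b' p"
proof -
  obtain Q where Q: "\<forall>x. Pk a p * discriminant p a b x = poly Q x" "coeff Q p = 1" "coeff Q (p - 1) = - Bk b p"
    using disc_poly[OF assms(1,3)] by blast
  obtain Q' where Q': "\<forall>x. Pk a' p * discriminant p a' b' x = poly Q' x" "coeff Q' p = 1" "coeff Q' (p - 1) = - Bk b' p"
    using disc_poly[OF assms(2,3)] by blast
  have P0: "Pk a p > 0" "Pk a' p > 0" using assms(1,2) unfolding Pk_def by (auto intro: prod_pos)
  have "poly (smult (1 / Pk a p) Q) = poly (smult (1 / Pk a' p) Q')"
  proof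
    fix x
    have "poly (smult (1 / Pk a p) Q) x = discriminant p a b x" using Q(1) P0 by (simp add: field_simps)
    also have "\<dots> = discriminant p a' b' x" using assms(4) by simp
    also have "\<dots> = poly (smult (1 / Pk a' p) Q') x" using Q'(1) P0 by (simp add: field_simps)
    finally show "poly (smult (1 / Pk a p) Q) x = poly (smult (1 / Pk a' p) Q') x" .
  qed
  then have eq: "smult (1 / Pk a p) Q = smult (1 / Pk a' p) Q'" by (simp add: poly_eq_poly_eq_iff)
  have "1 / Pk a p = 1 / Pk a' p" using arg_cong[OF eq, of "\<lambda>R. coeff R p"] Q(2) Q'(2) by simp
  then show PP: "Pk a p = Pk a' p" by simp
  have "Bk b p / Pk a p = Bk b' p / Pk a' p" using arg_cong[OF eq, of "\<lambda>R. coeff R (p - 1)"] Q(3) Q'(3) by simp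
  then show "Bk b p = Bk b' p" using PP P0 by (simp add: field_simps)
qed

lemma sum_shift1:
  fixes h :: "nat \<Rightarrow> real"
  shows "(\<Sum>i<p. h (Suc n + i)) = (\<Sum>i<p. h (n + i)) + h (n + p) - h n"
proof -
  have "(\<Sum>i<Suc p. h (n + i)) = h (n + 0) + (\<Sum>i<p. h (n + Suc i))" by (rule sum.lessThan_Suc_shift)
  moreover have "(\<Sum>i<Suc p. h (n + i)) = (\<Sum>i<p. h (n + i)) + h (n + p)" by simp
  ultimately show ?thesis by simp
qed

lemma periodic_window:
  fixes f :: "int \<Rightarrow> real"
  assumes per: "\<forall>n. f (n + int p) = f n" and n: "n \<ge> 1"
  shows "(\<Sum>i<p. f (int (n + i))) = (\<Sum>i<p. f (int (Suc i)))"
  using n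
proof (induction n rule: nat_induct_at_least)
  case base
  then show ?case by simp
next
  case (Suc n)
  have "(\<Sum>i<p. f (int (Suc n + i))) = (\<Sum>i<p. f (int (n + i))) + f (int (n + p)) - f (int n)"
    using sum_shift1[where h="\<lambda>j. f (int j)" and p=p and n=n] by simp
  also have "f (int (n + p)) = f (int n)" using per[rule_format, of "int n"] by simp
  finally show ?case using Suc.IH by simp
qed

lemma periodic_mod:
  fixes f :: "int \<Rightarrow> real"
  assumes per: "\<forall>n. f (n + int p) = f n"
  shows "f (int (n + p * q)) = f (int n)"
proof (induction q)
  case 0
  then show ?case by simp
next
  case (Suc q)
  have "f (int (n + p * Suc q)) = f (int (n + p * q) + int p)" by (simp add: algebra_simps)
  also have "\<dots> = f (int (n + p * q))" using per by blast
  finally show ?case using Suc.IH by simp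
qed

lemma periodic_bound:
  fixes f :: "int \<Rightarrow> real"
  assumes per: "\<forall>n. f (n + int p) = f n" and p: "p \<ge> 1"
  shows "\<bar>f (int n)\<bar> \<le> (\<Sum>i<p. \<bar>f (int i)\<bar>)"
proof -
  have "f (int n) = f (int (n mod p))"
    using periodic_mod[OF per, of "n mod p" "n div p"] by simp
  also have "\<bar>\<dots>\<bar> \<le> (\<Sum>i<p. \<bar>f (int i)\<bar>)"
    using p by (intro member_le_sum) auto
  finally show ?thesis .
qed

lemma torus_inv:
  assumes per0: "periodic_jacobi p a0 b0" and t: "(a', b') \<in> iso_torus p a0 b0" and n: "n \<ge> 1"
  shows "(\<Sum>i<p. b' (int (n + i))) = Bk b0 p"
    "(\<Sum>i<p. ln (a' (int (n + i)))) = ln (Pk a0 p)"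
    "\<forall>j. a' j > 0" "\<forall>j. a' (j + int p) = a' j" "\<forall>j. b' (j + int p) = b' j"
proof -
  have pj: "periodic_jacobi p a' b'" and d: "discriminant p a' b' = discriminant p a0 b0"
    using t unfolding iso_torus_def by auto
  show pos: "\<forall>j. a' j > 0" and pa: "\<forall>j. a' (j + int p) = a' j" and pb: "\<forall>j. b' (j + int p) = b' j"
    using pj unfolding periodic_jacobi_def by auto
  have p: "p \<ge> 1" and pos0: "\<forall>j. a0 j > 0" using per0 unfolding periodic_jacobi_def by auto
  have inv: "Pk a' p = Pk a0 p" "Bk b' p = Bk b0 p"
    using disc_invariants[OF pos pos0 p d] by auto
  show "(\<Sum>i<p. b' (int (n + i))) = Bk b0 p"
    using periodic_window[OF pb n] inv(2) by (simp add: Bk_def)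
  have "(\<Sum>i<p. ln (a' (int (n + i)))) = (\<Sum>i<p. ln (a' (int (Suc i))))"
    using periodic_window[of "\<lambda>j. ln (a' j)" p n] pa n by simp
  also have "\<dots> = ln (Pk a' p)"
  proof -
    have ne: "\<forall>j. a' j \<noteq> 0" using pos by (metis less_irrefl)
    show ?thesis unfolding Pk_def by (subst ln_prod) (auto simp: ne)
  qed
  finally show "(\<Sum>i<p. ln (a' (int (n + i)))) = ln (Pk a0 p)" using inv(1) by simp
qed

lemma chain:
  fixes E d :: "nat \<Rightarrow> real"
  assumes p: "p \<ge> 1" and d: "\<forall>j. d j \<ge> 0"
   and base: "\<forall>k\<le>N. k < p \<longrightarrow> E k \<le> c0"
   and step: "\<forall>k\<le>N. p \<le> k \<longrightarrow> E k \<le> E (k - p) + (d (k - p) + d (k - p + 1))"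
  shows "\<forall>k\<le>N. E k + d k \<le> c0 + 2 * (\<Sum>j<Suc k. d j)"
proof (intro allI impI)
  fix k assume "k \<le> N"
  then show "E k + d k \<le> c0 + 2 * (\<Sum>j<Suc k. d j)"
  proof (induction k rule: less_induct)
    case (less k)
    show ?case
    proof (cases "k < p")
      case True
      have "d k \<le> (\<Sum>j<Suc k. d j)" using d by (intro member_le_sum) auto
      moreover have "0 \<le> (\<Sum>j<Suc k. d j)" using d by (intro sum_nonneg) auto
      ultimately show ?thesis using base less.prems True by fastforce
    next
      case False
      then have kp: "p \<le> k" by simp
      have IH: "E (k - p) + d (k - p) \<le> c0 + 2 * (\<Sum>j<Suc (k - p). d j)"
        using less.IH[of "k - p"] less.prems p kp by simp
      have st: "E k \<le> E (k - p) + (d (k - p) + d (k - p + 1))" using step less.prems kp by blast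
      define S' where "S' = (\<Sum>j\<in>{Suc (k - p)..<Suc k}. d j)"
      have split: "(\<Sum>j<Suc k. d j) = (\<Sum>j<Suc (k - p). d j) + S'"
        unfolding S'_def lessThan_atLeast0 using kp by (subst sum.atLeastLessThan_concat) auto
      have "d (k - p + 1) \<le> S'" unfolding S'_def using d p kp by (intro member_le_sum) auto
      moreover have "d k \<le> S'" unfolding S'_def using d p kp by (intro member_le_sum) auto
      ultimately show ?thesis using IH st split by linarith
    qed
  qed
qed

lemma ln_diff_le:
  fixes u v c :: real
  assumes "c > 0" "u \<ge> c" "v \<ge> c"
  shows "\<bar>ln u - ln v\<bar> \<le> \<bar>u - v\<bar> / c"
proof -
  have h: "ln x - ln y \<le> (x - y) / c" if "x \<ge> c" "y \<ge> c" "x \<ge> y" for x y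
  proof -
    have xy: "x > 0" "y > 0" using that assms by auto
    have "ln (x / y) \<le> x / y - 1" using xy by (intro ln_le_minus_one) auto
    then have "ln x - ln y \<le> (x - y) / y" using xy by (simp add: ln_div field_simps)
    also have "\<dots> \<le> (x - y) / c" using that xy assms(1)
      by (intro divide_left_mono) auto
    finally show ?thesis .
  qed
  show ?thesis
  proof (cases "u \<ge> v")
    case True
    then have "ln v \<le> ln u" using assms by auto
    then show ?thesis using h[of u v] True assms by auto
  next
    case False
    then have "ln u \<le> ln v" using assms by auto
    then show ?thesis using h[of v u] False assms by auto
  qed
qed

lemma diff_le_ln:
  fixes u v :: real
  assumes "u > 0" "v > 0"
  shows "\<bar>u - v\<bar> \<le> max u v * \<bar>ln u - ln v\<bar>"
proof -
  have h: "x - y \<le> x * (ln x - ln y)" if "y \<le> x" "y > 0" for x y :: real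
  proof -
    have xy: "x > 0" using that by auto
    have "ln (y / x) \<le> y / x - 1" using xy that by (intro ln_le_minus_one) auto
    then have "ln y - ln x \<le> (y - x) / x" using xy that by (simp add: ln_div field_simps)
    then show ?thesis using xy by (simp add: field_simps)
  qed
  show ?thesis
  proof (cases "v \<le> u")
    case True
    then have "ln v \<le> ln u" using assms by auto
    then show ?thesis using h[of v u] True assms by (auto simp: max_def)
  next
    case False
    then have "ln u \<le> ln v" using assms by auto
    then show ?thesis using h[of u v] False assms by (auto simp: max_def)
  qed
qed

lemma geo_exp: fixes r :: real assumes "0 < r"
  shows "(\<lambda>k::nat. exp (- (r * real k))) sums (1 / (1 - exp (- r)))"
proof -
  have e: "exp (- r) < 1" "0 < exp (- r)" using assms by auto
  have eq: "exp (- (r * real k)) = exp (- r) ^ k" for k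
    by (simp add: exp_of_nat_mult[symmetric] algebra_simps)
  show ?thesis unfolding eq using geometric_sums[of "exp (- r)"] e by simp
qed

lemma le_eps_lin:
  fixes X Y C :: real
  assumes "C \<ge> 0" "\<And>e. e > 0 \<Longrightarrow> X \<le> Y + C * e"
  shows "X \<le> Y"
proof (rule field_le_epsilon)
  fix e :: real assume e: "e > 0"
  have "e / (C + 1) > 0" using assms e by simp
  then have "X \<le> Y + C * (e / (C + 1))" using assms(2) by blast
  also have "C * (e / (C + 1)) \<le> e" using assms e by (simp add: field_simps)
  finally show "X \<le> Y + e" by simp
qed

locale PJ =
  fixes p :: nat and a0 b0 :: "int \<Rightarrow> real" and \<epsilon> :: real and a b :: "nat \<Rightarrow> real"
  assumes per0: "periodic_jacobi p a0 b0" and eps: "\<epsilon> > 0"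
    and abnd: "\<forall>n\<ge>1. \<epsilon> < a n \<and> a n < 1 / \<epsilon>"
    and bndA: "\<exists>B. \<forall>n. \<bar>a n\<bar> \<le> B" and bndB: "\<exists>B. \<forall>n. \<bar>b n\<bar> \<le> B"
begin

definition \<delta> :: "nat \<Rightarrow> real" where "\<delta> n = dist_tilde_torus p a0 b0 n a b"

lemma p1: "p \<ge> 1" using per0 unfolding periodic_jacobi_def by simp

lemma T0: "(a0, b0) \<in> iso_torus p a0 b0" using per0 unfolding iso_torus_def by simp

lemma Tne: "iso_torus p a0 b0 \<noteq> {}" using T0 by blast

lemma dt_nonneg: "dist_tilde p n a b a' b' \<ge> 0"
  unfolding dist_tilde_def by (intro sum_nonneg) auto

lemma delta_le: "t \<in> iso_torus p a0 b0 \<Longrightarrow> \<delta> n \<le> dist_tilde p n a b (fst t) (snd t)"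
  unfolding \<delta>_def dist_tilde_torus_def
  by (rule cINF_lower) (auto intro!: bdd_belowI2[where m=0] dt_nonneg)

lemma delta_nonneg: "\<delta> n \<ge> 0"
  unfolding \<delta>_def dist_tilde_torus_def using Tne by (intro cINF_greatest dt_nonneg) auto

lemma delta_near:
  assumes "\<eta> > 0"
  shows "\<exists>t\<in>iso_torus p a0 b0. dist_tilde p n a b (fst t) (snd t) < \<delta> n + \<eta>"
proof -
  have "Inf ((\<lambda>t. dist_tilde p n a b (fst t) (snd t)) ` iso_torus p a0 b0) < \<delta> n + \<eta>"
    using assms unfolding \<delta>_def dist_tilde_torus_def by simp
  then show ?thesis using Tne by (subst (asm) cInf_less_iff) (auto intro!: bdd_belowI2[where m=0] dt_nonneg)
qed

lemma term_le_dt: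
  assumes "k < p"
  shows "\<bar>a (n + k) - a' (int (n + k))\<bar> + \<bar>b (n + k) - b' (int (n + k))\<bar> \<le> dist_tilde p n a b a' b'"
  unfolding dist_tilde_def using assms by (intro member_le_sum[where f="\<lambda>k. \<bar>a (n + k) - a' (int (n + k))\<bar> + \<bar>b (n + k) - b' (int (n + k))\<bar>"]) auto

lemma L1:
  assumes n: "n \<ge> 1"
  shows "\<bar>(\<Sum>i<p. b (n + i)) - Bk b0 p\<bar> \<le> \<delta> n"
  unfolding \<delta>_def dist_tilde_torus_def
proof (rule cINF_greatest[OF Tne])
  fix t assume t: "t \<in> iso_torus p a0 b0"
  obtain a' b' where tt: "t = (a', b')" by (cases t)
  have "(\<Sum>i<p. b' (int (n + i))) = Bk b0 p" using torus_inv[OF per0 t[unfolded tt] n] by simp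
  then have "\<bar>(\<Sum>i<p. b (n + i)) - Bk b0 p\<bar> = \<bar>\<Sum>i<p. b (n + i) - b' (int (n + i))\<bar>"
    by (simp add: sum_subtractf)
  also have "\<dots> \<le> (\<Sum>i<p. \<bar>b (n + i) - b' (int (n + i))\<bar>)" by (rule sum_abs)
  also have "\<dots> \<le> dist_tilde p n a b a' b'" unfolding dist_tilde_def by (intro sum_mono) auto
  finally show "\<bar>(\<Sum>i<p. b (n + i)) - Bk b0 p\<bar> \<le> dist_tilde p n a b (fst t) (snd t)" using tt by simp
qed

lemma L2:
  assumes n: "n \<ge> 1" and small: "\<delta> n < \<epsilon> / 2"
  shows "\<bar>(\<Sum>i<p. ln (a (n + i))) - ln (Pk a0 p)\<bar> \<le> (2 / \<epsilon>) * \<delta> n"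
proof (rule le_eps_lin[where C="2 / \<epsilon>"])
  show "0 \<le> 2 / \<epsilon>" using eps by simp
  fix e :: real assume e: "e > 0"
  define e' where "e' = min e (\<epsilon> / 2 - \<delta> n)"
  have e': "e' > 0" "e' \<le> e" "\<delta> n + e' \<le> \<epsilon> / 2" using e small unfolding e'_def by (auto simp: min_def)
  obtain t where t: "t \<in> iso_torus p a0 b0" and tl: "dist_tilde p n a b (fst t) (snd t) < \<delta> n + e'"
    using delta_near[OF e'(1)] by blast
  obtain a' b' where tt: "t = (a', b')" by (cases t)
  note inv = torus_inv[OF per0 t[unfolded tt] n]
  have dl: "dist_tilde p n a b a' b' < \<epsilon> / 2" "dist_tilde p n a b a' b' \<le> \<delta> n + e" using tl tt e' by auto
  have each: "\<bar>ln (a (n + i)) - ln (a' (int (n + i)))\<bar> \<le> (2 / \<epsilon>) * \<bar>a (n + i) - a' (int (n + i))\<bar>" if i: "i < p" for i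
  proof -
    have "\<bar>a (n + i) - a' (int (n + i))\<bar> \<le> dist_tilde p n a b a' b'"
      using term_le_dt[OF i, of n a' b'] by simp
    then have d: "\<bar>a (n + i) - a' (int (n + i))\<bar> < \<epsilon> / 2" using dl by simp
    have an: "a (n + i) > \<epsilon>" using abnd n by simp
    have "\<bar>ln (a (n + i)) - ln (a' (int (n + i)))\<bar> \<le> \<bar>a (n + i) - a' (int (n + i))\<bar> / (\<epsilon> / 2)"
    proof (rule ln_diff_le)
      show "\<epsilon> / 2 \<le> a' (int (n + i))" using d[unfolded abs_less_iff] an by linarith
    qed (use an eps in auto)
    then show ?thesis by (simp add: field_simps)
  qed
  have "\<bar>(\<Sum>i<p. ln (a (n + i))) - ln (Pk a0 p)\<bar> = \<bar>\<Sum>i<p. ln (a (n + i)) - ln (a' (int (n + i)))\<bar>"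
    using inv(2) by (simp add: sum_subtractf)
  also have "\<dots> \<le> (\<Sum>i<p. \<bar>ln (a (n + i)) - ln (a' (int (n + i)))\<bar>)" by (rule sum_abs)
  also have "\<dots> \<le> (\<Sum>i<p. (2 / \<epsilon>) * \<bar>a (n + i) - a' (int (n + i))\<bar>)" using each by (intro sum_mono) auto
  also have "\<dots> = (2 / \<epsilon>) * (\<Sum>i<p. \<bar>a (n + i) - a' (int (n + i))\<bar>)" by (simp add: sum_distrib_left)
  also have "\<dots> \<le> (2 / \<epsilon>) * dist_tilde p n a b a' b'"
    unfolding dist_tilde_def using eps by (intro mult_left_mono sum_mono) auto
  also have "\<dots> \<le> (2 / \<epsilon>) * (\<delta> n + e)" using dl eps by (intro mult_left_mono) auto
  finally show "\<bar>(\<Sum>i<p. ln (a (n + i))) - ln (Pk a0 p)\<bar> \<le> (2 / \<epsilon>) * \<delta> n + (2 / \<epsilon>) * e"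
    by (simp add: distrib_left)
qed

end

context PJ begin

lemma dexp_summable:
  assumes t: "t \<in> iso_torus p a0 b0"
  shows "summable (\<lambda>k. exp (- real k) * (\<bar>a (m + k) - fst t (int (m + k))\<bar> + \<bar>b (m + k) - snd t (int (m + k))\<bar>))"
proof -
  obtain a' b' where tt: "t = (a', b')" by (cases t)
  note inv = torus_inv[OF per0 t[unfolded tt] p1]
  obtain Ba where Ba: "\<forall>n. \<bar>a n\<bar> \<le> Ba" using bndA by blast
  obtain Bb where Bb: "\<forall>n. \<bar>b n\<bar> \<le> Bb" using bndB by blast
  define Sa where "Sa = (\<Sum>i<p. \<bar>a' (int i)\<bar>)"
  define Sb where "Sb = (\<Sum>i<p. \<bar>b' (int i)\<bar>)"
  have ba: "\<bar>a' (int n)\<bar> \<le> Sa" for n unfolding Sa_def by (rule periodic_bound[OF inv(4) p1])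
  have bb: "\<bar>b' (int n)\<bar> \<le> Sb" for n unfolding Sb_def by (rule periodic_bound[OF inv(5) p1])
  define C where "C = Ba + Sa + Bb + Sb"
  have g: "summable (\<lambda>k::nat. C * exp (- (1 * real k)))"
    using geo_exp[of 1] by (intro summable_mult) (auto simp: sums_iff)
  show ?thesis
  proof (rule summable_comparison_test'[OF g])
    fix k :: nat
    have "\<bar>a (m + k) - a' (int (m + k))\<bar> + \<bar>b (m + k) - b' (int (m + k))\<bar> \<le> C"
    proof -
      have "\<bar>a (m + k) - a' (int (m + k))\<bar> \<le> Ba + Sa" using Ba[rule_format, of "m+k"] ba[of "m+k"] by linarith
      moreover have "\<bar>b (m + k) - b' (int (m + k))\<bar> \<le> Bb + Sb" using Bb[rule_format, of "m+k"] bb[of "m+k"] by linarith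
      ultimately show ?thesis unfolding C_def by simp
    qed
    then have "exp (- real k) * (\<bar>a (m + k) - a' (int (m + k))\<bar> + \<bar>b (m + k) - b' (int (m + k))\<bar>) \<le> exp (- real k) * C"
      by (intro mult_left_mono) auto
    then show "norm (exp (- real k) * (\<bar>a (m + k) - fst t (int (m + k))\<bar> + \<bar>b (m + k) - snd t (int (m + k))\<bar>)) \<le> C * exp (- (1 * real k))"
      using tt by (simp add: mult.commute)
  qed
qed

lemma dexp_nonneg:
  assumes t: "t \<in> iso_torus p a0 b0"
  shows "dist_exp m a b (fst t) (snd t) \<ge> 0"
  unfolding dist_exp_def using dexp_summable[OF t] by (intro suminf_nonneg) auto

lemma dexp_lower:
  assumes t: "t \<in> iso_torus p a0 b0"
  shows "dist_exp_torus p a0 b0 m a b \<le> dist_exp m a b (fst t) (snd t)"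
  unfolding dist_exp_torus_def
  by (rule cINF_lower[OF _ t]) (auto intro!: bdd_belowI2[where m=0] dexp_nonneg)

lemma dexpT_nonneg: "dist_exp_torus p a0 b0 m a b \<ge> 0"
  unfolding dist_exp_torus_def using Tne by (intro cINF_greatest dexp_nonneg) auto

lemma first_ineq: "\<delta> m \<le> exp (real p - 1) * dist_exp_torus p a0 b0 m a b"
proof -
  have "\<delta> m / exp (real p - 1) \<le> dist_exp_torus p a0 b0 m a b"
    unfolding dist_exp_torus_def
  proof (rule cINF_greatest[OF Tne])
    fix t assume t: "t \<in> iso_torus p a0 b0"
    define f where "f k = exp (- real k) * (\<bar>a (m + k) - fst t (int (m + k))\<bar> + \<bar>b (m + k) - snd t (int (m + k))\<bar>)" for k
    have "\<delta> m \<le> dist_tilde p m a b (fst t) (snd t)" by (rule delta_le[OF t])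
    also have "\<dots> \<le> (\<Sum>k<p. exp (real p - 1) * f k)"
      unfolding dist_tilde_def
    proof (rule sum_mono)
      fix k assume "k \<in> {..<p}"
      then have k: "real k \<le> real p - 1" by auto
      have "1 \<le> exp (real p - 1) * exp (- real k)"
        using k by (simp add: exp_add[symmetric])
      then have "1 * (\<bar>a (m + k) - fst t (int (m + k))\<bar> + \<bar>b (m + k) - snd t (int (m + k))\<bar>)
          \<le> (exp (real p - 1) * exp (- real k)) * (\<bar>a (m + k) - fst t (int (m + k))\<bar> + \<bar>b (m + k) - snd t (int (m + k))\<bar>)"
        by (intro mult_right_mono) auto
      then show "\<bar>a (m + k) - fst t (int (m + k))\<bar> + \<bar>b (m + k) - snd t (int (m + k))\<bar> \<le> exp (real p - 1) * f k"
        unfolding f_def by (simp add: mult.assoc)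
    qed
    also have "\<dots> = exp (real p - 1) * (\<Sum>k<p. f k)" by (simp add: sum_distrib_left)
    also have "(\<Sum>k<p. f k) \<le> suminf f"
      using dexp_summable[OF t, of m] unfolding f_def by (intro sum_le_suminf) auto
    then have "exp (real p - 1) * (\<Sum>k<p. f k) \<le> exp (real p - 1) * suminf f" by simp
    finally have "\<delta> m \<le> exp (real p - 1) * dist_exp m a b (fst t) (snd t)"
      unfolding dist_exp_def f_def by simp
    then show "\<delta> m / exp (real p - 1) \<le> dist_exp m a b (fst t) (snd t)"
      by (simp add: field_simps)
  qed
  then show ?thesis by (simp add: field_simps)
qed

end

context PJ begin

definition K1 :: real where "K1 = 10 / \<epsilon>^2 + 2"

lemma chain_bounds:
  assumes m: "m \<ge> 1" and s: "(sa, sb) \<in> iso_torus p a0 b0"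
    and sl: "dist_tilde p m a b sa sb < \<delta> m + \<eta>" and eta: "\<eta> > 0"
  shows "\<bar>a (m + k) - sa (int (m + k))\<bar> + \<bar>b (m + k) - sb (int (m + k))\<bar>
          \<le> K1 * (\<delta> m + \<eta> + 2 * (\<Sum>j<Suc k. \<delta> (m + j)))"
proof -
  define R where "R k = \<delta> m + \<eta> + 2 * (\<Sum>j<Suc k. \<delta> (m + j))" for k
  note inv = torus_inv[OF per0 s]
  have sa_pos: "\<forall>j. sa j > 0" and sa_per: "\<forall>j. sa (j + int p) = sa j" and sb_per: "\<forall>j. sb (j + int p) = sb j"
    using inv[OF p1] by auto
  have dnn: "\<forall>j. \<delta> j \<ge> 0" using delta_nonneg by blast
  have Rmono: "R k1 \<le> R k2" if "k1 \<le> k2" for k1 k2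
  proof -
    have "(\<Sum>j<Suc k1. \<delta> (m + j)) \<le> (\<Sum>j<Suc k2. \<delta> (m + j))"
      using that dnn by (intro sum_mono2) auto
    then show ?thesis unfolding R_def by simp
  qed
  have Rge0: "R k1 \<ge> \<delta> m + \<eta>" for k1
    unfolding R_def using dnn by (simp add: sum_nonneg)
  have Rge: "R k1 \<ge> 2 * \<delta> (m + j)" if "j \<le> k1" for j k1
  proof -
    have "\<delta> (m + j) \<le> (\<Sum>j<Suc k1. \<delta> (m + j))" using that dnn by (intro member_le_sum) auto
    then show ?thesis unfolding R_def using dnn[rule_format, of m] eta by linarith
  qed
  have base: "\<bar>a (m + k1) - sa (int (m + k1))\<bar> \<le> \<delta> m + \<eta> \<and> \<bar>b (m + k1) - sb (int (m + k1))\<bar> \<le> \<delta> m + \<eta>"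
    if "k1 < p" for k1
    using term_le_dt[OF that, of m sa sb] sl by linarith
  have bstep: "\<bar>b (m + k1) - sb (int (m + k1))\<bar> \<le> \<bar>b (m + (k1 - p)) - sb (int (m + (k1 - p)))\<bar>
       + (\<delta> (m + (k1 - p)) + \<delta> (m + (k1 - p + 1)))" if "p \<le> k1" for k1
  proof -
    define n where "n = m + (k1 - p)"
    have n1: "n \<ge> 1" using m unfolding n_def by simp
    have mk: "m + k1 = n + p" "m + (k1 - p + 1) = Suc n" "m + (k1 - p) = n" using that unfolding n_def by auto
    have l1: "\<bar>(\<Sum>i<p. b (n + i)) - Bk b0 p\<bar> \<le> \<delta> n" by (rule L1[OF n1])
    have l2: "\<bar>(\<Sum>i<p. b (Suc n + i)) - Bk b0 p\<bar> \<le> \<delta> (Suc n)" by (rule L1) simp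
    have sh: "(\<Sum>i<p. b (Suc n + i)) = (\<Sum>i<p. b (n + i)) + b (n + p) - b n" by (rule sum_shift1)
    have diff: "\<bar>b (n + p) - b n\<bar> \<le> \<delta> n + \<delta> (Suc n)" using l1 l2 sh by linarith
    have sper: "sb (int (n + p)) = sb (int n)" using sb_per[rule_format, of "int n"] by simp
    have "\<bar>b (n + p) - sb (int (n + p))\<bar> \<le> \<bar>b n - sb (int n)\<bar> + \<bar>b (n + p) - b n\<bar>"
      unfolding sper by linarith
    then show ?thesis using diff unfolding mk by linarith
  qed
  have Eb: "\<bar>b (m + k) - sb (int (m + k))\<bar> + \<delta> (m + k) \<le> R k"
  proof -
    have "\<forall>k'\<le>k. \<bar>b (m + k') - sb (int (m + k'))\<bar> + \<delta> (m + k') \<le> (\<delta> m + \<eta>) + 2 * (\<Sum>j<Suc k'. \<delta> (m + j))"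
    proof (rule chain[where p=p and N=k and d="\<lambda>j. \<delta> (m + j)" and E="\<lambda>k'. \<bar>b (m + k') - sb (int (m + k'))\<bar>"])
      show "1 \<le> p" by (rule p1)
      show "\<forall>j. 0 \<le> \<delta> (m + j)" using dnn by blast
      show "\<forall>k'\<le>k. k' < p \<longrightarrow> \<bar>b (m + k') - sb (int (m + k'))\<bar> \<le> \<delta> m + \<eta>" using base by blast
      show "\<forall>k'\<le>k. p \<le> k' \<longrightarrow> \<bar>b (m + k') - sb (int (m + k'))\<bar> \<le> \<bar>b (m + (k' - p)) - sb (int (m + (k' - p)))\<bar>
           + (\<delta> (m + (k' - p)) + \<delta> (m + (k' - p + 1)))" using bstep by blast
    qed
    then show ?thesis unfolding R_def by blast
  qed
  have Ea: "(\<epsilon> / 2) * \<bar>ln (a (m + k)) - ln (sa (int (m + k)))\<bar> + \<delta> (m + k) \<le> R k" if Rk: "R k < \<epsilon> / 2"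
  proof -
    have "\<forall>k'\<le>k. (\<epsilon> / 2) * \<bar>ln (a (m + k')) - ln (sa (int (m + k')))\<bar> + \<delta> (m + k') \<le> (\<delta> m + \<eta>) + 2 * (\<Sum>j<Suc k'. \<delta> (m + j))"
    proof (rule chain[where p=p and N=k and d="\<lambda>j. \<delta> (m + j)" and E="\<lambda>k'. (\<epsilon> / 2) * \<bar>ln (a (m + k')) - ln (sa (int (m + k')))\<bar>"])
      show "1 \<le> p" by (rule p1)
      show "\<forall>j. 0 \<le> \<delta> (m + j)" using dnn by blast
      show "\<forall>k'\<le>k. k' < p \<longrightarrow> (\<epsilon> / 2) * \<bar>ln (a (m + k')) - ln (sa (int (m + k')))\<bar> \<le> \<delta> m + \<eta>"
      proof (intro allI impI)
        fix k' assume k': "k' \<le> k" "k' < p"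
        have d: "\<bar>a (m + k') - sa (int (m + k'))\<bar> \<le> \<delta> m + \<eta>" using base[OF k'(2)] by blast
        have sm: "\<delta> m + \<eta> < \<epsilon> / 2" using Rge0[of k] Rk by linarith
        have an: "a (m + k') > \<epsilon>" using abnd m by simp
        have "\<bar>ln (a (m + k')) - ln (sa (int (m + k')))\<bar> \<le> \<bar>a (m + k') - sa (int (m + k'))\<bar> / (\<epsilon> / 2)"
        proof (rule ln_diff_le)
          show "\<epsilon> / 2 \<le> sa (int (m + k'))" using d[unfolded abs_le_iff] sm an by linarith
        qed (use an eps in auto)
        then have "(\<epsilon> / 2) * \<bar>ln (a (m + k')) - ln (sa (int (m + k')))\<bar> \<le> \<bar>a (m + k') - sa (int (m + k'))\<bar>"
          using eps by (simp add: field_simps)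
        then show "(\<epsilon> / 2) * \<bar>ln (a (m + k')) - ln (sa (int (m + k')))\<bar> \<le> \<delta> m + \<eta>" using d by linarith
      qed
      show "\<forall>k'\<le>k. p \<le> k' \<longrightarrow> (\<epsilon> / 2) * \<bar>ln (a (m + k')) - ln (sa (int (m + k')))\<bar>
          \<le> (\<epsilon> / 2) * \<bar>ln (a (m + (k' - p))) - ln (sa (int (m + (k' - p))))\<bar> + (\<delta> (m + (k' - p)) + \<delta> (m + (k' - p + 1)))"
      proof (intro allI impI)
        fix k' assume k': "k' \<le> k" "p \<le> k'"
        define n where "n = m + (k' - p)"
        have n1: "n \<ge> 1" using m unfolding n_def by simp
        have mk: "m + k' = n + p" "m + (k' - p + 1) = Suc n" "m + (k' - p) = n" using k' unfolding n_def by auto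
        have idx1: "k' - p \<le> k" using k' by linarith
        have idx2: "k' - p + 1 \<le> k" using k' p1 by linarith
        have "2 * \<delta> n \<le> R k" using Rge[OF idx1] unfolding n_def .
        then have s1: "\<delta> n < \<epsilon> / 2" using Rk dnn[rule_format, of n] by linarith
        have "2 * \<delta> (Suc n) \<le> R k" using Rge[OF idx2] mk(2) by simp
        then have s2: "\<delta> (Suc n) < \<epsilon> / 2" using Rk dnn[rule_format, of "Suc n"] by linarith
        have l1: "\<bar>(\<Sum>i<p. ln (a (n + i))) - ln (Pk a0 p)\<bar> \<le> (2 / \<epsilon>) * \<delta> n" by (rule L2[OF n1 s1])
        have l2: "\<bar>(\<Sum>i<p. ln (a (Suc n + i))) - ln (Pk a0 p)\<bar> \<le> (2 / \<epsilon>) * \<delta> (Suc n)" by (rule L2[OF _ s2]) simp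
        have sh: "(\<Sum>i<p. ln (a (Suc n + i))) = (\<Sum>i<p. ln (a (n + i))) + ln (a (n + p)) - ln (a n)" by (rule sum_shift1)
        have diff: "\<bar>ln (a (n + p)) - ln (a n)\<bar> \<le> (2 / \<epsilon>) * \<delta> n + (2 / \<epsilon>) * \<delta> (Suc n)" using l1 l2 sh by linarith
        have sper: "sa (int (n + p)) = sa (int n)" using sa_per[rule_format, of "int n"] by simp
        have "\<bar>ln (a (n + p)) - ln (sa (int (n + p)))\<bar> \<le> \<bar>ln (a n) - ln (sa (int n))\<bar> + \<bar>ln (a (n + p)) - ln (a n)\<bar>"
          unfolding sper by linarith
        then have A: "(\<epsilon> / 2) * \<bar>ln (a (n + p)) - ln (sa (int (n + p)))\<bar> \<le> (\<epsilon> / 2) * \<bar>ln (a n) - ln (sa (int n))\<bar> + (\<epsilon> / 2) * \<bar>ln (a (n + p)) - ln (a n)\<bar>"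
          using eps by (simp add: distrib_left[symmetric])
        have "(\<epsilon> / 2) * \<bar>ln (a (n + p)) - ln (a n)\<bar> \<le> (\<epsilon> / 2) * ((2 / \<epsilon>) * \<delta> n + (2 / \<epsilon>) * \<delta> (Suc n))"
          using diff eps by (intro mult_left_mono) auto
        also have "(\<epsilon> / 2) * ((2 / \<epsilon>) * \<delta> n + (2 / \<epsilon>) * \<delta> (Suc n)) = \<delta> n + \<delta> (Suc n)"
          using eps by (simp add: field_simps)
        finally have B: "(\<epsilon> / 2) * \<bar>ln (a (n + p)) - ln (a n)\<bar> \<le> \<delta> n + \<delta> (Suc n)" .
        show "(\<epsilon> / 2) * \<bar>ln (a (m + k')) - ln (sa (int (m + k')))\<bar>
          \<le> (\<epsilon> / 2) * \<bar>ln (a (m + (k' - p))) - ln (sa (int (m + (k' - p))))\<bar> + (\<delta> (m + (k' - p)) + \<delta> (m + (k' - p + 1)))"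
          unfolding mk using A B by linarith
      qed
    qed
    then show ?thesis unfolding R_def by blast
  qed
  have Rnn: "R k \<ge> 0" using Rge0[of k] dnn[rule_format, of m] eta by linarith
  have amk: "a (m + k) > \<epsilon>" "a (m + k) < 1 / \<epsilon>" using abnd m by auto
  have h6: "6 / \<epsilon>^2 \<le> 10 / \<epsilon>^2 + 1" and h4: "4 / \<epsilon>^2 \<le> 10 / \<epsilon>^2"
  proof -
    have "6 / \<epsilon>^2 \<le> 10 / \<epsilon>^2" "4 / \<epsilon>^2 \<le> 10 / \<epsilon>^2" using eps by (auto intro!: divide_right_mono)
    then show "6 / \<epsilon>^2 \<le> 10 / \<epsilon>^2 + 1" "4 / \<epsilon>^2 \<le> 10 / \<epsilon>^2" by auto
  qed
  have Aconv: "\<bar>a (m + k) - sa (int (m + k))\<bar> \<le> (10 / \<epsilon>^2 + 1) * R k"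
  proof (cases "R k < \<epsilon> / 2")
    case True
    define l where "l = \<bar>ln (a (m + k)) - ln (sa (int (m + k)))\<bar>"
    have "(\<epsilon> / 2) * l \<le> R k" using Ea[OF True] dnn[rule_format, of "m+k"] unfolding l_def by linarith
    then have l_le: "l \<le> (2 / \<epsilon>) * R k" using eps by (simp add: field_simps)
    have "(2 / \<epsilon>) * R k < 1" using True eps by (simp add: field_simps)
    then have l1: "l \<le> 1" using l_le by linarith
    have sapos: "sa (int (m + k)) > 0" using sa_pos by blast
    have "ln (sa (int (m + k))) \<le> ln (a (m + k)) + 1" using l1 unfolding l_def by linarith
    then have "sa (int (m + k)) \<le> exp (ln (a (m + k)) + 1)" using sapos by (subst exp_ln[symmetric, OF sapos]) (simp only: exp_le_cancel_iff)
    also have "\<dots> = a (m + k) * exp 1" using amk eps by (simp add: exp_add)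
    also have "\<dots> \<le> a (m + k) * 3" using amk eps exp_le by (intro mult_left_mono) auto
    finally have "sa (int (m + k)) \<le> a (m + k) * 3" .
    moreover have "3 / \<epsilon> = 3 * (1 / \<epsilon>)" by simp
    ultimately have sab: "sa (int (m + k)) \<le> 3 / \<epsilon>" using amk by linarith
    have mx: "max (a (m + k)) (sa (int (m + k))) \<le> 3 / \<epsilon>" using sab amk eps by (simp add: field_simps)
    have "\<bar>a (m + k) - sa (int (m + k))\<bar> \<le> max (a (m + k)) (sa (int (m + k))) * l"
      unfolding l_def using amk eps sapos by (intro diff_le_ln) auto
    also have "\<dots> \<le> (3 / \<epsilon>) * ((2 / \<epsilon>) * R k)"
      using mx l_le eps by (intro mult_mono) (auto simp: l_def)
    also have "\<dots> = (6 / \<epsilon>^2) * R k" by (simp add: power2_eq_square)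
    also have "\<dots> \<le> (10 / \<epsilon>^2 + 1) * R k" using Rnn h6 by (intro mult_right_mono) auto
    finally show ?thesis .
  next
    case False
    define r where "r = m + k mod p"
    have kp: "k mod p < p" using p1 by simp
    have r1: "r \<ge> 1" using m unfolding r_def by simp
    have mkr: "m + k = r + p * (k div p)" unfolding r_def by simp
    have sper: "sa (int (m + k)) = sa (int r)" unfolding mkr by (rule periodic_mod[OF sa_per])
    have "\<bar>a r - sa (int r)\<bar> \<le> \<delta> m + \<eta>" using base[OF kp] unfolding r_def by blast
    then have "sa (int r) \<le> a r + R k" using Rge0[of k] by linarith
    moreover have "a r < 1 / \<epsilon>" using abnd r1 by blast
    ultimately have sab: "sa (int (m + k)) \<le> 1 / \<epsilon> + R k" using sper by linarith
    have "\<bar>a (m + k) - sa (int (m + k))\<bar> \<le> a (m + k) + sa (int (m + k))"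
      using sa_pos[rule_format, of "int (m+k)"] amk eps unfolding abs_le_iff by linarith
    also have "\<dots> \<le> 2 / \<epsilon> + R k" using sab amk by simp
    also have "2 / \<epsilon> \<le> (10 / \<epsilon>^2) * R k"
    proof -
      have "1 \<le> (2 / \<epsilon>) * R k" using False eps by (simp add: field_simps)
      then have "2 / \<epsilon> * 1 \<le> 2 / \<epsilon> * ((2 / \<epsilon>) * R k)" using eps by (intro mult_left_mono) auto
      also have "\<dots> = (4 / \<epsilon>^2) * R k" by (simp add: power2_eq_square)
      also have "\<dots> \<le> (10 / \<epsilon>^2) * R k" using Rnn h4 by (intro mult_right_mono) auto
      finally show ?thesis by simp
    qed
    finally show ?thesis by (simp add: distrib_right)
  qed
  have "\<bar>b (m + k) - sb (int (m + k))\<bar> \<le> R k" using Eb dnn[rule_format, of "m+k"] by linarith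
  then have "\<bar>a (m + k) - sa (int (m + k))\<bar> + \<bar>b (m + k) - sb (int (m + k))\<bar> \<le> (10 / \<epsilon>^2 + 2) * R k"
    using Aconv by (simp add: distrib_right)
  then show ?thesis unfolding K1_def R_def .
qed

end

definition c1 :: real where "c1 = 1 / (1 - exp (- 1))"
definition c2 :: real where "c2 = 1 / (1 - exp (- (1 / 4)))"

lemma c1_sums: "(\<lambda>k::nat. exp (- real k)) sums c1"
  using geo_exp[of 1] unfolding c1_def by simp
lemma c2_sums: "(\<lambda>k::nat. exp (- (real k / 4))) sums c2"
  using geo_exp[of "1/4"] unfolding c2_def by (simp add: mult.commute)

lemma kp1_le: "real k + 1 \<le> 4 * exp (real k / 4)"
  using exp_ge_add_one_self[of "real k / 4"] by linarith

context PJ begin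

lemma K1_pos: "K1 > 0" unfolding K1_def using eps by (simp add: add_pos_nonneg)

lemma main_point:
  assumes m: "m \<ge> 1" and M: "\<forall>j. exp (- real j / 2) * \<delta> (m + j) \<le> M"
  shows "dist_exp_torus p a0 b0 m a b \<le> 12 * K1 * c2 * M"
proof (rule le_eps_lin[where C="K1 * c1"])
  have c1p: "c1 \<ge> 0" unfolding c1_def by simp
  show "0 \<le> K1 * c1" using K1_pos c1p by simp
  have dnn: "\<forall>j. \<delta> j \<ge> 0" using delta_nonneg by blast
  have dM: "\<delta> (m + j) \<le> exp (real j / 2) * M" for j
  proof -
    have "\<delta> (m + j) = exp (real j / 2) * (exp (- real j / 2) * \<delta> (m + j))"
      by (simp add: mult.assoc[symmetric] exp_add[symmetric])
    also have "\<dots> \<le> exp (real j / 2) * M" using M by (intro mult_left_mono) auto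
    finally show ?thesis .
  qed
  have M0: "M \<ge> 0" using dM[of 0] dnn[rule_format, of m] by simp
  have dm: "\<delta> m \<le> M" using dM[of 0] by simp
  fix \<eta> :: real assume eta: "\<eta> > 0"
  obtain t where t: "t \<in> iso_torus p a0 b0" and tl: "dist_tilde p m a b (fst t) (snd t) < \<delta> m + \<eta>"
    using delta_near[OF eta] by blast
  obtain sa sb where tt: "t = (sa, sb)" by (cases t)
  define D where "D k = \<bar>a (m + k) - sa (int (m + k))\<bar> + \<bar>b (m + k) - sb (int (m + k))\<bar>" for k
  define g where "g k = K1 * \<eta> * exp (- real k) + 12 * K1 * M * exp (- (real k / 4))" for k
  have gs: "g sums (K1 * \<eta> * c1 + 12 * K1 * M * c2)"
    unfolding g_def by (intro sums_add sums_mult c1_sums c2_sums)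
  have fg: "exp (- real k) * D k \<le> g k" for k
  proof -
    have Dk: "D k \<le> K1 * (\<delta> m + \<eta> + 2 * (\<Sum>j<Suc k. \<delta> (m + j)))"
      unfolding D_def using chain_bounds[OF m t[unfolded tt] _ eta] tl tt by simp
    have "(\<Sum>j<Suc k. \<delta> (m + j)) \<le> (\<Sum>j<Suc k. exp (real k / 2) * M)"
    proof (rule sum_mono)
      fix j assume "j \<in> {..<Suc k}"
      then have "exp (real j / 2) \<le> exp (real k / 2)" by simp
      then have "exp (real j / 2) * M \<le> exp (real k / 2) * M" using M0 by (rule mult_right_mono)
      then show "\<delta> (m + j) \<le> exp (real k / 2) * M" using dM[of j] by linarith
    qed
    also have "\<dots> = (real k + 1) * exp (real k / 2) * M" by simp
    finally have S: "(\<Sum>j<Suc k. \<delta> (m + j)) \<le> (real k + 1) * exp (real k / 2) * M" .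
    have one: "1 \<le> (real k + 1) * exp (real k / 2)"
    proof -
      have "1 * 1 \<le> (real k + 1) * exp (real k / 2)" by (intro mult_mono) auto
      then show ?thesis by simp
    qed
    have "M \<le> (real k + 1) * exp (real k / 2) * M" using one M0 mult_right_mono[OF one M0] by simp
    then have R1: "\<delta> m + \<eta> + 2 * (\<Sum>j<Suc k. \<delta> (m + j)) \<le> \<eta> + 3 * ((real k + 1) * exp (real k / 2) * M)"
      using S dm by linarith
    have "(real k + 1) * exp (real k / 2) * M \<le> (4 * exp (real k / 4)) * exp (real k / 2) * M"
      using kp1_le[of k] M0 by (intro mult_right_mono) auto
    also have "\<dots> = 4 * exp (3 * real k / 4) * M" by (simp add: exp_add[symmetric])
    finally have R2: "\<delta> m + \<eta> + 2 * (\<Sum>j<Suc k. \<delta> (m + j)) \<le> \<eta> + 12 * exp (3 * real k / 4) * M"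
      using R1 by linarith
    have "exp (- real k) * D k \<le> exp (- real k) * (K1 * (\<eta> + 12 * exp (3 * real k / 4) * M))"
      using Dk R2 K1_pos by (intro mult_left_mono order.trans[OF Dk]) auto
    also have "\<dots> = K1 * \<eta> * exp (- real k) + 12 * K1 * M * (exp (- real k) * exp (3 * real k / 4))"
      by (simp add: algebra_simps)
    also have "exp (- real k) * exp (3 * real k / 4) = exp (- (real k / 4))"
      by (simp add: exp_add[symmetric])
    finally show ?thesis unfolding g_def .
  qed
  have Dnn: "0 \<le> exp (- real k) * D k" for k unfolding D_def by simp
  have fs: "summable (\<lambda>k. exp (- real k) * D k)"
    by (rule summable_comparison_test'[OF sums_summable[OF gs]]) (use fg Dnn in auto)
  have "dist_exp_torus p a0 b0 m a b \<le> dist_exp m a b sa sb"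
    using dexp_lower[OF t] tt by simp
  also have "dist_exp m a b sa sb = (\<Sum>k. exp (- real k) * D k)"
    unfolding dist_exp_def D_def ..
  also have "\<dots> \<le> suminf g" using fs sums_summable[OF gs] fg by (intro suminf_le) auto
  also have "suminf g = K1 * \<eta> * c1 + 12 * K1 * M * c2" using gs by (simp add: sums_iff)
  finally show "dist_exp_torus p a0 b0 m a b \<le> 12 * K1 * c2 * M + K1 * c1 * \<eta>"
    by (simp add: algebra_simps)
qed

end

theorem proposition3p5:
  fixes p :: nat and a0 b0 :: "int \<Rightarrow> real" and q :: ennreal and \<epsilon> :: real
  assumes "periodic_jacobi p a0 b0"
    and "1 \<le> q"
    and "\<epsilon> > 0"
  shows "\<exists>C::real. \<forall>a b :: nat \<Rightarrow> real.
     (bounded (range b) \<and> (\<forall>n\<ge>1. \<epsilon> < a n \<and> a n < 1 / \<epsilon>) \<and> bounded (range a)) \<longrightarrow>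
       ennreal (exp (1 - real p)) * lq_norm q (\<lambda>m. dist_tilde_torus p a0 b0 m a b)
         \<le> lq_norm q (\<lambda>m. dist_exp_torus p a0 b0 m a b)
     \<and> lq_norm q (\<lambda>m. dist_exp_torus p a0 b0 m a b)
         \<le> ennreal C * lq_norm q (\<lambda>m. dist_tilde_torus p a0 b0 m a b)"
proof (intro exI allI impI conjI)
  fix a b :: "nat \<Rightarrow> real"
  assume H: "bounded (range b) \<and> (\<forall>n\<ge>1. \<epsilon> < a n \<and> a n < 1 / \<epsilon>) \<and> bounded (range a)"
  have bA: "\<exists>B. \<forall>n. \<bar>a n\<bar> \<le> B" using H unfolding bounded_iff by auto
  have bB: "\<exists>B. \<forall>n. \<bar>b n\<bar> \<le> B" using H unfolding bounded_iff by auto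
  interpret PJ p a0 b0 \<epsilon> a b
    using assms H bA bB by unfold_locales auto
  let ?u = "\<lambda>m. dist_tilde_torus p a0 b0 m a b"
  let ?v = "\<lambda>m. dist_exp_torus p a0 b0 m a b"
  have "lq_norm q ?u \<le> ennreal (exp (real p - 1)) * lq_norm q ?v"
  proof (rule lq_scale[OF assms(2)])
    show "0 \<le> exp (real p - 1)" by simp
    show "\<forall>m\<ge>1. \<bar>?u m\<bar> \<le> exp (real p - 1) * \<bar>?v m\<bar>"
      using first_ineq delta_nonneg dexpT_nonneg unfolding \<delta>_def by simp
  qed
  then have "ennreal (exp (1 - real p)) * lq_norm q ?u \<le> ennreal (exp (1 - real p)) * (ennreal (exp (real p - 1)) * lq_norm q ?v)"
    by (rule mult_left_mono) simp
  also have "\<dots> = lq_norm q ?v"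
    by (simp add: mult.assoc[symmetric] ennreal_mult[symmetric] exp_add[symmetric])
  finally show "ennreal (exp (1 - real p)) * lq_norm q ?u \<le> lq_norm q ?v" .
  have c2p: "c2 > 0" unfolding c2_def by simp
  have "lq_norm q ?v \<le> ennreal (12 * K1 * c2 * cst) * lq_norm q ?u"
  proof (rule lq_sup[OF assms(2)])
    show "0 < 12 * K1 * c2" using K1_pos c2p by simp
    show "\<forall>m\<ge>1. \<forall>M\<ge>0. (\<forall>j. exp (- real j / 2) * \<bar>?u (m + j)\<bar> \<le> M) \<longrightarrow> \<bar>?v m\<bar> \<le> 12 * K1 * c2 * M"
      using main_point delta_nonneg dexpT_nonneg unfolding \<delta>_def by simp
  qed
  then show "lq_norm q ?v \<le> ennreal (12 * (10 / \<epsilon>^2 + 2) * c2 * cst) * lq_norm q ?u"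
    unfolding K1_def .
qed

end
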